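(* Let $(X,\sigma_X)$ be a one-sided full shift, $(Y,\sigma_Y)$ a subshift, $\pi:X\to Y$ a one-block factor map, and $f\in C(X)$ depending only on the first coordinate. With $\bar g_n(y)=\sup_{E_n(y)}\sum_{x\in E_n(y)}e^{f(x)+\cdots+f(\sigma_X^{n-1}x)}$, one has $\bar g_n(y)=\bar g_1(y)\bar g_{n-1}(\sigma_Yy)$ for all $n\ge2$ and $y\in Y$. Consequently $\lim_{n\to\infty}\frac1n\int\log\bar g_n\,dm=\int\log\bar g_1\,dm$ for all $m\in M(Y,\sigma_Y)$, and the image under $\pi$ of the unique invariant Gibbs measure for $f$ is the unique invariant Gibbs measure for the locally constant function $\log\bar g_1$ on $Y$.
   Context: Full shift: $\{1,\dots,k\}^{\mathbb N}$ with left shift; subshift: closed shift-invariant subset of some $\{1,\dots,l\}^{\mathbb N}$. One-block factor map: continuous surjection commuting with shifts, $\pi(x)_i$ depending only on $x_i$. $E_n(y)$: any set with exactly one point from each cylinder $[x_1\cdots x_n]$ of $X$ with $\pi([x_1\cdots x_n])\subseteq[y_1\cdots y_n]$; the sup is over all such choices. Gibbs measure for $\phi\in C(Z)$: invariant $\mu$ with $C_0^{-1}<\mu([z_1\cdots z_n])/e^{-nP(\phi)+\sum_{i<n}\phi(\sigma^iz)}<C_0$ for all $z,n$. *)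

theory Defs
  imports "HOL-Probability.Probability"
begin

text \<open>Points of a one-sided shift space are sequences nat => nat (the paper's
  coordinates x_1, x_2, ... are x 0, x 1, ...).  The topology on nat => nat is
  the product topology (Function_Topology), nat being discrete.\<close>

definition sshift :: "(nat \<Rightarrow> nat) \<Rightarrow> (nat \<Rightarrow> nat)" where
  "sshift x = (\<lambda>i. x (Suc i))"

definition full_shift :: "nat \<Rightarrow> (nat \<Rightarrow> nat) set" where
  "full_shift k = {x. \<forall>i. x i \<in> {1..k}}"

definition subshift :: "nat \<Rightarrow> (nat \<Rightarrow> nat) set \<Rightarrow> bool" where
  "subshift l Y \<longleftrightarrow> Y \<subseteq> full_shift l \<and> closed Y \<and> sshift ` Y \<subseteq> Y"

definition one_block_factor ::
  "(nat \<Rightarrow> nat) set \<Rightarrow> (nat \<Rightarrow> nat) set \<Rightarrow> ((nat \<Rightarrow> nat) \<Rightarrow> (nat \<Rightarrow> nat)) \<Rightarrow> bool" where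
  "one_block_factor X Y \<pi> \<longleftrightarrow> continuous_on X \<pi> \<and> \<pi> ` X = Y \<and>
     (\<forall>x\<in>X. \<pi> (sshift x) = sshift (\<pi> x)) \<and>
     (\<exists>p. \<forall>x\<in>X. \<forall>i. \<pi> x i = p (x i))"

definition cyl :: "(nat \<Rightarrow> nat) set \<Rightarrow> nat \<Rightarrow> (nat \<Rightarrow> nat) \<Rightarrow> (nat \<Rightarrow> nat) set" where
  "cyl Z n z = {z' \<in> Z. \<forall>i<n. z' i = z i}"

definition cylinders :: "(nat \<Rightarrow> nat) set \<Rightarrow> nat \<Rightarrow> (nat \<Rightarrow> nat) set set" where
  "cylinders Z n = {cyl Z n z | z. z \<in> Z}"

definition bsum :: "((nat \<Rightarrow> nat) \<Rightarrow> real) \<Rightarrow> nat \<Rightarrow> (nat \<Rightarrow> nat) \<Rightarrow> real" where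
  "bsum \<phi> n z = (\<Sum>i<n. \<phi> ((sshift ^^ i) z))"

definition adm_cyls ::
  "(nat \<Rightarrow> nat) set \<Rightarrow> (nat \<Rightarrow> nat) set \<Rightarrow> ((nat \<Rightarrow> nat) \<Rightarrow> (nat \<Rightarrow> nat)) \<Rightarrow> nat \<Rightarrow> (nat \<Rightarrow> nat)
     \<Rightarrow> (nat \<Rightarrow> nat) set set" where
  "adm_cyls X Y \<pi> n y = {C \<in> cylinders X n. \<pi> ` C \<subseteq> cyl Y n y}"

definition E_set ::
  "(nat \<Rightarrow> nat) set \<Rightarrow> (nat \<Rightarrow> nat) set \<Rightarrow> ((nat \<Rightarrow> nat) \<Rightarrow> (nat \<Rightarrow> nat)) \<Rightarrow> nat \<Rightarrow> (nat \<Rightarrow> nat)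
     \<Rightarrow> (nat \<Rightarrow> nat) set \<Rightarrow> bool" where
  "E_set X Y \<pi> n y E \<longleftrightarrow> E \<subseteq> \<Union>(adm_cyls X Y \<pi> n y) \<and>
     (\<forall>C\<in>adm_cyls X Y \<pi> n y. card (E \<inter> C) = 1)"

definition gbar ::
  "(nat \<Rightarrow> nat) set \<Rightarrow> (nat \<Rightarrow> nat) set \<Rightarrow> ((nat \<Rightarrow> nat) \<Rightarrow> (nat \<Rightarrow> nat)) \<Rightarrow> ((nat \<Rightarrow> nat) \<Rightarrow> real)
     \<Rightarrow> nat \<Rightarrow> (nat \<Rightarrow> nat) \<Rightarrow> real" where
  "gbar X Y \<pi> f n y = Sup {(\<Sum>x\<in>E. exp (bsum f n x)) | E. E_set X Y \<pi> n y E}"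

definition invariant_prob :: "(nat \<Rightarrow> nat) set \<Rightarrow> (nat \<Rightarrow> nat) measure \<Rightarrow> bool" where
  "invariant_prob Z m \<longleftrightarrow> sets m = sets (restrict_space borel Z) \<and> prob_space m \<and>
     sshift \<in> m \<rightarrow>\<^sub>M m \<and> (\<forall>A\<in>sets m. emeasure m (sshift -` A \<inter> space m) = emeasure m A)"

definition pressure :: "(nat \<Rightarrow> nat) set \<Rightarrow> ((nat \<Rightarrow> nat) \<Rightarrow> real) \<Rightarrow> real" where
  "pressure Z \<phi> = lim (\<lambda>n. ln (\<Sum>C\<in>cylinders Z n. (SUP z\<in>C. exp (bsum \<phi> n z))) / real n)"

definition gibbs :: "(nat \<Rightarrow> nat) set \<Rightarrow> ((nat \<Rightarrow> nat) \<Rightarrow> real) \<Rightarrow> (nat \<Rightarrow> nat) measure \<Rightarrow> bool" where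
  "gibbs Z \<phi> \<mu> \<longleftrightarrow> invariant_prob Z \<mu> \<and>
     (\<exists>C0>0. \<forall>z\<in>Z. \<forall>n\<ge>1.
        inverse C0 < measure \<mu> (cyl Z n z) / exp (- real n * pressure Z \<phi> + bsum \<phi> n z) \<and>
        measure \<mu> (cyl Z n z) / exp (- real n * pressure Z \<phi> + bsum \<phi> n z) < C0)"

end

theory Submission
  imports Defs
begin

lemma sets_borel_fun: "sets (borel :: (nat\<Rightarrow>nat) measure) = sets (PiM UNIV (\<lambda>_::nat. count_space (UNIV::nat set)))"
proof -
  have "sets (PiM UNIV (\<lambda>_::nat. count_space (UNIV::nat set))) = sets (PiM UNIV (\<lambda>_::nat. borel::nat measure))"
    by (rule sets_PiM_cong) (auto simp: sets_borel_eq_count_space)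
  then show ?thesis using sets_PiM_equal_borel[where 'a=nat and 'b=nat] by simp
qed

lemma coord_meas[measurable]: "(\<lambda>x::nat\<Rightarrow>nat. x i) \<in> measurable borel (count_space UNIV)"
  using measurable_component_singleton[of i UNIV "\<lambda>_::nat. count_space (UNIV::nat set)"]
  by (simp add: measurable_cong_sets[OF sets_borel_fun refl])

lemma rect_sets: "finite J \<Longrightarrow> {x::nat\<Rightarrow>nat. \<forall>j\<in>J. x j \<in> F j} \<in> sets borel"
  by measurable

lemma fun_meas: "(\<lambda>x::nat\<Rightarrow>nat. h (x i) :: real) \<in> borel_measurable borel"
  by measurable

lemma funpow_sshift: "(sshift ^^ m) x = (\<lambda>i. x (i + m))"
  by (induction m arbitrary: x) (auto simp: sshift_def funpow_Suc_right)

lemma sshift_meas[measurable]: "sshift \<in> measurable borel borel"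
proof -
  have "sshift \<in> measurable (PiM UNIV (\<lambda>_::nat. count_space (UNIV::nat set))) (PiM UNIV (\<lambda>_::nat. count_space (UNIV::nat set)))"
    unfolding sshift_def
    by (rule measurable_PiM_single') (auto simp: space_PiM)
  then show ?thesis by (simp add: measurable_cong_sets[OF sets_borel_fun sets_borel_fun])
qed

locale bsys =
  fixes A :: "nat set" and \<Phi> :: "nat \<Rightarrow> real"
  assumes finA: "finite A" and neA: "A \<noteq> {}"
begin

definition "S = {x::nat\<Rightarrow>nat. \<forall>i. x i \<in> A}"
definition "Zs = (\<Sum>a\<in>A. exp (\<Phi> a))"
definition "q a = (if a \<in> A then exp (\<Phi> a) / Zs else 0)"
definition "Pm = embed_pmf q"
definition "M0 = PiM UNIV (\<lambda>_::nat. measure_pmf Pm)"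
definition "\<beta> = restrict_space M0 S"
definition "b n z = (\<Prod>j<n. q (z j))"

lemma Zs_pos: "Zs > 0"
  unfolding Zs_def using finA neA by (intro sum_pos) auto

lemma q_nonneg: "q a \<ge> 0"
  using Zs_pos by (simp add: q_def)

lemma q_pos: "a \<in> A \<Longrightarrow> q a > 0"
  using Zs_pos by (simp add: q_def)

lemma sum_q: "(\<Sum>a\<in>A. q a) = 1"
proof -
  have "(\<Sum>a\<in>A. q a) = (\<Sum>a\<in>A. exp (\<Phi> a) / Zs)" by (simp add: q_def)
  also have "\<dots> = (\<Sum>a\<in>A. exp (\<Phi> a)) / Zs" by (simp add: sum_divide_distrib)
  also have "\<dots> = Zs / Zs" by (simp add: Zs_def)
  finally show ?thesis using Zs_pos by simp
qed

lemma pmf_Pm: "pmf Pm a = q a"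
proof -
  have "(\<integral>\<^sup>+x. ennreal (q x) \<partial>count_space UNIV) = (\<Sum>x\<in>A. ennreal (q x))"
    using finA by (intro nn_integral_count_space') (auto simp: q_def)
  also have "\<dots> = ennreal (\<Sum>x\<in>A. q x)" using q_nonneg by (simp add: sum_ennreal)
  finally have "(\<integral>\<^sup>+x. ennreal (q x) \<partial>count_space UNIV) = 1" using sum_q by simp
  then show ?thesis unfolding Pm_def using q_nonneg by (subst pmf_embed_pmf) auto
qed

lemma set_Pm: "set_pmf Pm = A"
  using q_pos by (auto simp: set_pmf_eq pmf_Pm q_def)

lemma meas_Pm: "measure Pm B = (\<Sum>a\<in>B\<inter>A. q a)"
proof -
  have "measure Pm B = measure Pm (B \<inter> set_pmf Pm)" by (simp add: measure_Int_set_pmf)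
  also have "\<dots> = (\<Sum>a\<in>B\<inter>A. q a)" using finA
    by (simp add: set_Pm measure_measure_pmf_finite pmf_Pm)
  finally show ?thesis .
qed

lemma sets_M0: "sets M0 = sets borel"
proof -
  have "sets M0 = sets (PiM UNIV (\<lambda>_::nat. count_space (UNIV::nat set)))"
    unfolding M0_def by (rule sets_PiM_cong) auto
  then show ?thesis using sets_borel_fun by simp
qed

lemma space_M0: "space M0 = UNIV"
  unfolding M0_def by (simp add: space_PiM)

interpretation P: product_prob_space "\<lambda>_::nat. measure_pmf Pm" UNIV
  by unfold_locales

lemma prob_M0: "prob_space M0"
  unfolding M0_def by (rule P.prob_space_axioms)

lemma rect_eq: "prod_emb UNIV (\<lambda>_::nat. measure_pmf Pm) J (PiE J F) = {x. \<forall>j\<in>J. x j \<in> F j}"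
  by (auto simp: prod_emb_def PiE_iff space_PiM)

lemma R0: "finite J \<Longrightarrow> emeasure M0 {x. \<forall>j\<in>J. x j \<in> F j} = (\<Prod>j\<in>J. ennreal (measure Pm (F j)))"
  unfolding M0_def rect_eq[symmetric]
  by (subst P.emeasure_PiM_emb) (auto simp: measure_pmf.emeasure_eq_measure)

lemma S_sets: "S \<in> sets M0"
proof -
  have "S \<in> sets borel" unfolding S_def by measurable
  then show ?thesis by (simp add: sets_M0)
qed

lemma AE_S: "AE x in M0. x \<in> S"
proof -
  have "\<And>i. AE x in M0. x i \<in> A"
    unfolding M0_def by (rule P.AE_component) (auto simp: AE_measure_pmf_iff set_Pm)
  then show ?thesis unfolding S_def by (simp add: AE_all_countable)
qed

lemma emeasure_S: "emeasure M0 S = 1"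
proof -
  interpret prob_space M0 by (rule prob_M0)
  have "emeasure M0 S = emeasure M0 (space M0)"
    using AE_S S_sets by (intro emeasure_eq_AE) auto
  then show ?thesis using prob_space.emeasure_space_1[OF prob_M0] by simp
qed

lemma sets_beta: "sets \<beta> = sets (restrict_space borel S)"
  unfolding \<beta>_def by (rule sets_restrict_space_cong[OF sets_M0])

lemma space_beta: "space \<beta> = S"
  unfolding \<beta>_def by (simp add: space_restrict_space space_M0)

lemma prob_beta: "prob_space \<beta>"
  unfolding \<beta>_def by (rule prob_space_restrict_space[OF S_sets emeasure_S])

lemma emeasure_beta: "D \<subseteq> S \<Longrightarrow> emeasure \<beta> D = emeasure M0 D"
  unfolding \<beta>_def using S_sets space_M0 by (intro emeasure_restrict_space) auto

lemma emeasure_rect_S: "finite J \<Longrightarrow> emeasure \<beta> (S \<inter> {x. \<forall>j\<in>J. x j \<in> F j}) = (\<Prod>j\<in>J. ennreal (measure Pm (F j)))"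
proof -
  assume J: "finite J"
  have "emeasure \<beta> (S \<inter> {x. \<forall>j\<in>J. x j \<in> F j}) = emeasure M0 (S \<inter> {x. \<forall>j\<in>J. x j \<in> F j})"
    by (intro emeasure_beta) auto
  also have "\<dots> = emeasure M0 {x. \<forall>j\<in>J. x j \<in> F j}"
  proof (rule emeasure_eq_AE)
    show "AE x in M0. (x \<in> S \<inter> {x. \<forall>j\<in>J. x j \<in> F j}) = (x \<in> {x. \<forall>j\<in>J. x j \<in> F j})"
      using AE_S by eventually_elim auto
    have "{x. \<forall>j\<in>J. x j \<in> F j} \<in> sets M0" using rect_sets[OF J] by (simp add: sets_M0)
    then show "{x. \<forall>j\<in>J. x j \<in> F j} \<in> sets M0" "S \<inter> {x. \<forall>j\<in>J. x j \<in> F j} \<in> sets M0"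
      using S_sets by auto
  qed
  also have "\<dots> = (\<Prod>j\<in>J. ennreal (measure Pm (F j)))" using R0[OF J] .
  finally show ?thesis .
qed

lemma measure_rect_S: "finite J \<Longrightarrow> measure \<beta> (S \<inter> {x. \<forall>j\<in>J. x j \<in> F j}) = (\<Prod>j\<in>J. measure Pm (F j))"
proof -
  assume J: "finite J"
  have "(\<Prod>j\<in>J. ennreal (measure Pm (F j))) = ennreal (\<Prod>j\<in>J. measure Pm (F j))"
    by (simp add: prod_ennreal)
  then show ?thesis using emeasure_rect_S[OF J, of F] unfolding measure_def
    by (simp add: prod_nonneg)
qed

lemma cyl_rect: "cyl S n z = S \<inter> {x. \<forall>j\<in>{..<n}. x j \<in> {z j}}"
  unfolding cyl_def by auto

lemma measure_cyl_beta: "z \<in> S \<Longrightarrow> measure \<beta> (cyl S n z) = b n z"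
  unfolding cyl_rect b_def using measure_rect_S[of "{..<n}" "\<lambda>j. {z j}"]
  by (simp add: meas_Pm S_def)

end

context bsys begin

interpretation P: product_prob_space "\<lambda>_::nat. measure_pmf Pm" UNIV
  by unfold_locales

lemma sshift_M0: "sshift \<in> measurable M0 M0"
  using sshift_meas by (simp add: measurable_cong_sets[OF sets_M0 sets_M0])

lemma distr_shift: "distr M0 M0 sshift = M0"
  unfolding M0_def
proof (rule P.PiM_eq)
  show "sets (distr (Pi\<^sub>M UNIV (\<lambda>_. measure_pmf Pm)) (Pi\<^sub>M UNIV (\<lambda>_. measure_pmf Pm)) sshift) =
    sets (Pi\<^sub>M UNIV (\<lambda>_. measure_pmf Pm))" by simp
  fix J :: "nat set" and F :: "nat \<Rightarrow> nat set"
  assume J: "finite J"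
  have "emeasure (distr M0 M0 sshift) {x. \<forall>j\<in>J. x j \<in> F j}
      = emeasure M0 (sshift -` {x. \<forall>j\<in>J. x j \<in> F j} \<inter> space M0)"
    using sshift_M0 rect_sets[OF J, of F] by (intro emeasure_distr) (auto simp: sets_M0)
  also have "sshift -` {x. \<forall>j\<in>J. x j \<in> F j} \<inter> space M0 = {x. \<forall>j'\<in>Suc ` J. x j' \<in> F (j' - 1)}"
    by (auto simp: sshift_def space_M0)
  also have "emeasure M0 \<dots> = (\<Prod>j'\<in>Suc ` J. ennreal (measure Pm (F (j' - 1))))"
    using J by (intro R0) auto
  also have "\<dots> = (\<Prod>j\<in>J. ennreal (measure Pm (F j)))"
    by (subst prod.reindex) auto
  finally show "emeasure (distr (Pi\<^sub>M UNIV (\<lambda>_. measure_pmf Pm)) (Pi\<^sub>M UNIV (\<lambda>_. measure_pmf Pm)) sshift)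
       (prod_emb UNIV (\<lambda>_. measure_pmf Pm) J (Pi\<^sub>E J F)) = (\<Prod>j\<in>J. emeasure (measure_pmf Pm) (F j))"
    unfolding rect_eq M0_def[symmetric] by (simp add: measure_pmf.emeasure_eq_measure)
qed

lemma S_shift: "x \<in> S \<Longrightarrow> sshift x \<in> S"
  by (auto simp: S_def sshift_def)

lemma sets_restrS: "sets (restrict_space borel S) = sets (restrict_space M0 S)"
  using sets_restrict_space_cong[OF sets_M0] by simp

lemma restrS_iff: "D \<in> sets (restrict_space borel S) \<longleftrightarrow> D \<subseteq> S \<and> D \<in> sets M0"
  unfolding sets_restrS using S_sets space_M0 by (subst sets_restrict_space_iff) auto

lemma inv_beta: "invariant_prob S \<beta>"
  unfolding invariant_prob_def
proof (intro conjI ballI)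
  show "sets \<beta> = sets (restrict_space borel S)" by (rule sets_beta)
  show "prob_space \<beta>" by (rule prob_beta)
  show "sshift \<in> \<beta> \<rightarrow>\<^sub>M \<beta>"
    unfolding \<beta>_def using S_shift by (intro measurable_restrict_space3[OF sshift_M0]) auto
  fix D assume "D \<in> sets \<beta>"
  then have D: "D \<subseteq> S" "D \<in> sets M0" using restrS_iff sets_beta by auto
  have "emeasure \<beta> (sshift -` D \<inter> space \<beta>) = emeasure M0 (sshift -` D \<inter> S)"
    by (simp add: space_beta emeasure_beta)
  also have "\<dots> = emeasure M0 (sshift -` D \<inter> space M0)"
  proof (rule emeasure_eq_AE)
    show "AE x in M0. (x \<in> sshift -` D \<inter> S) = (x \<in> sshift -` D \<inter> space M0)"
      using AE_S by eventually_elim (auto simp: space_M0)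
    have "sshift -` D \<inter> space M0 \<in> sets M0" using measurable_sets[OF sshift_M0 D(2)] .
    then show "sshift -` D \<inter> space M0 \<in> sets M0" "sshift -` D \<inter> S \<in> sets M0"
      using S_sets by (auto simp: space_M0 Int_absorb2)
  qed
  also have "\<dots> = emeasure (distr M0 M0 sshift) D"
    using sshift_M0 D by (simp add: emeasure_distr)
  also have "\<dots> = emeasure \<beta> D" using D by (simp add: distr_shift emeasure_beta)
  finally show "emeasure \<beta> (sshift -` D \<inter> space \<beta>) = emeasure \<beta> D" .
qed

end

context bsys begin

interpretation P: product_prob_space "\<lambda>_::nat. measure_pmf Pm" UNIV
  by unfold_locales

definition "a0 = (SOME a. a \<in> A)"
definition "ext (n::nat) (w::nat\<Rightarrow>nat) = (\<lambda>i. if i < n then w i else a0)"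
definition "W (n::nat) = PiE {..<n} (\<lambda>_. A)"

lemma a0: "a0 \<in> A" unfolding a0_def using neA by (simp add: some_in_eq)

lemma finite_W: "finite (W n)"
  unfolding W_def using finA by (intro finite_PiE) simp_all

lemma ext_S: "w \<in> W n \<Longrightarrow> ext n w \<in> S"
  using a0 by (auto simp: W_def ext_def S_def PiE_iff)

lemma restr_W: "x \<in> S \<Longrightarrow> restrict x {..<n} \<in> W n"
  by (auto simp: W_def S_def)

lemma mem_cyl_ext: "w \<in> W n \<Longrightarrow> x \<in> S \<Longrightarrow> x \<in> cyl S n (ext n w) \<longleftrightarrow> restrict x {..<n} = w"
  by (auto simp: cyl_def ext_def W_def PiE_iff extensional_def fun_eq_iff)

lemma cyl_sets: "cyl S n z \<in> sets (restrict_space borel S)"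
proof -
  have "{x. \<forall>j\<in>{..<n}. x j \<in> {z j}} \<in> sets M0" using rect_sets[of "{..<n}"] by (simp add: sets_M0)
  then show ?thesis unfolding restrS_iff cyl_rect using S_sets by auto
qed

lemma int_decomp:
  fixes \<nu> :: "(nat \<Rightarrow> nat) measure" and g :: "(nat \<Rightarrow> nat) \<Rightarrow> real"
  assumes sets: "sets \<nu> = sets (restrict_space borel S)" and fin: "finite_measure \<nu>"
    and dep: "\<And>x y. x \<in> S \<Longrightarrow> y \<in> S \<Longrightarrow> (\<And>j. j < n \<Longrightarrow> x j = y j) \<Longrightarrow> g x = g y"
  shows "(\<integral>x. g x \<partial>\<nu>) = (\<Sum>w\<in>W n. g (ext n w) * measure \<nu> (cyl S n (ext n w)))"
proof -
  have sp: "space \<nu> = S" using sets_eq_imp_space_eq[OF sets] by (simp add: space_restrict_space)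
  have eq: "g x = (\<Sum>w\<in>W n. g (ext n w) * indicator (cyl S n (ext n w)) x)" if x: "x \<in> S" for x
  proof -
    have "(\<Sum>w\<in>W n. g (ext n w) * indicator (cyl S n (ext n w)) x)
        = (\<Sum>w\<in>W n. if w = restrict x {..<n} then g (ext n w) else 0)"
      using x by (intro sum.cong) (auto simp: mem_cyl_ext indicator_def)
    also have "\<dots> = g (ext n (restrict x {..<n}))"
      using restr_W[OF x, of n] finite_W[of n] by (simp add: sum.delta'[where S="W n"])
    also have "\<dots> = g x"
      using x restr_W[OF x] ext_S by (intro dep) (auto simp: ext_def)
    finally show ?thesis by simp
  qed
  have "(\<integral>x. g x \<partial>\<nu>) = (\<integral>x. (\<Sum>w\<in>W n. g (ext n w) * indicator (cyl S n (ext n w)) x) \<partial>\<nu>)"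
    by (rule Bochner_Integration.integral_cong[OF refl]) (auto simp: sp eq)
  also have "\<dots> = (\<Sum>w\<in>W n. (\<integral>x. g (ext n w) * indicator (cyl S n (ext n w)) x \<partial>\<nu>))"
  proof (rule Bochner_Integration.integral_sum)
    fix w
    have "cyl S n (ext n w) \<in> sets \<nu>" using cyl_sets sets by simp
    then show "integrable \<nu> (\<lambda>x. g (ext n w) * indicator (cyl S n (ext n w)) x)"
      using fin by (intro integrable_mult_right integrable_real_indicator) (auto simp: finite_measure.emeasure_finite less_top[symmetric])
  qed
  also have "\<dots> = (\<Sum>w\<in>W n. g (ext n w) * measure \<nu> (cyl S n (ext n w)))"
    by (intro sum.cong refl) (simp add: sp cyl_def Int_absorb2)
  finally show ?thesis .
qed

lemma prob_sets_finite: "sets \<nu> = sets (restrict_space borel S) \<Longrightarrow> prob_space \<nu> \<Longrightarrow> finite_measure \<nu>"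
  by (simp add: prob_space.finite_measure)

lemma int_le:
  fixes \<mu> :: "(nat \<Rightarrow> nat) measure" and g :: "(nat \<Rightarrow> nat) \<Rightarrow> real"
  assumes sets: "sets \<mu> = sets (restrict_space borel S)" and pr: "prob_space \<mu>"
    and bound: "\<And>z n. z \<in> S \<Longrightarrow> n \<ge> 1 \<Longrightarrow> measure \<mu> (cyl S n z) \<le> C * b n z"
    and n: "n \<ge> 1"
    and dep: "\<And>x y. x \<in> S \<Longrightarrow> y \<in> S \<Longrightarrow> (\<And>j. j < n \<Longrightarrow> x j = y j) \<Longrightarrow> g x = g y"
    and nn: "\<And>x. x \<in> S \<Longrightarrow> g x \<ge> 0"
  shows "(\<integral>x. g x \<partial>\<mu>) \<le> C * (\<integral>x. g x \<partial>\<beta>)"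
proof -
  have "(\<integral>x. g x \<partial>\<mu>) = (\<Sum>w\<in>W n. g (ext n w) * measure \<mu> (cyl S n (ext n w)))"
    by (rule int_decomp[OF sets prob_space.finite_measure[OF pr] dep])
  also have "\<dots> \<le> (\<Sum>w\<in>W n. g (ext n w) * (C * measure \<beta> (cyl S n (ext n w))))"
    using bound n nn ext_S by (intro sum_mono mult_left_mono) (auto simp: measure_cyl_beta)
  also have "\<dots> = C * (\<Sum>w\<in>W n. g (ext n w) * measure \<beta> (cyl S n (ext n w)))"
    by (simp add: sum_distrib_left algebra_simps)
  also have "(\<Sum>w\<in>W n. g (ext n w) * measure \<beta> (cyl S n (ext n w))) = (\<integral>x. g x \<partial>\<beta>)"
    by (rule int_decomp[OF sets_beta prob_space.finite_measure[OF prob_beta] dep, symmetric])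
  finally show ?thesis .
qed

end

context bsys begin

interpretation P: product_prob_space "\<lambda>_::nat. measure_pmf Pm" UNIV
  by unfold_locales

lemma b_ext: "b n (ext n w) = (\<Prod>i<n. q (w i))"
  unfolding b_def ext_def by (intro prod.cong) auto

lemma rect_sum:
  assumes J: "J \<subseteq> {..<n}"
  shows "(\<Sum>w\<in>W n. indicator (S \<inter> {x. \<forall>j\<in>J. x j \<in> F j}) (ext n w) * b n (ext n w))
       = (\<Prod>j\<in>J. measure Pm (F j))"
proof -
  define A' where "A' i = (if i \<in> J then A \<inter> F i else A)" for i
  define W' where "W' = PiE {..<n} A'"
  have fin: "finite J" using J finite_subset by blast
  have "(\<Sum>w\<in>W n. indicator (S \<inter> {x. \<forall>j\<in>J. x j \<in> F j}) (ext n w) * b n (ext n w))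
      = (\<Sum>w\<in>W n. if w \<in> W' then (\<Prod>i<n. q (w i)) else 0)"
  proof (intro sum.cong refl)
    fix w assume w: "w \<in> W n"
    have e1: "ext n w \<in> {x. \<forall>j\<in>J. x j \<in> F j} \<longleftrightarrow> (\<forall>j\<in>J. w j \<in> F j)"
      using J unfolding ext_def by auto
    have e2: "w \<in> W' \<longleftrightarrow> (\<forall>j\<in>J. w j \<in> F j)"
      using w J unfolding W'_def A'_def W_def PiE_iff by auto
    have "ext n w \<in> {x. \<forall>j\<in>J. x j \<in> F j} \<longleftrightarrow> w \<in> W'" using e1 e2 by simp
    then show "indicator (S \<inter> {x. \<forall>j\<in>J. x j \<in> F j}) (ext n w) * b n (ext n w)
      = (if w \<in> W' then (\<Prod>i<n. q (w i)) else 0)"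
      using ext_S[OF w] by (simp add: b_ext indicator_def)
  qed
  also have "\<dots> = (\<Sum>w\<in>W n \<inter> W'. (\<Prod>i<n. q (w i)))"
    by (rule sum.inter_restrict[OF finite_W, symmetric])
  also have "W n \<inter> W' = W'"
    unfolding W_def W'_def A'_def by (intro Int_absorb1 PiE_mono) auto
  also have "(\<Sum>w\<in>W'. (\<Prod>i<n. q (w i))) = (\<Prod>i<n. \<Sum>a\<in>A' i. q a)"
    unfolding W'_def using finA by (subst prod_sum_PiE) (auto simp: A'_def)
  also have "\<dots> = (\<Prod>i\<in>{..<n} - J. \<Sum>a\<in>A' i. q a) * (\<Prod>i\<in>J. \<Sum>a\<in>A' i. q a)"
    using J by (intro prod.subset_diff) auto
  also have "(\<Prod>i\<in>{..<n} - J. \<Sum>a\<in>A' i. q a) = 1"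
    by (intro prod.neutral) (auto simp: A'_def sum_q)
  also have "(\<Prod>i\<in>J. \<Sum>a\<in>A' i. q a) = (\<Prod>j\<in>J. measure Pm (F j))"
    by (intro prod.cong refl) (auto simp: A'_def meas_Pm Int_commute)
  finally show ?thesis by simp
qed

lemma cyl_vals_M0:
  fixes \<mu> :: "(nat \<Rightarrow> nat) measure"
  assumes sets: "sets \<mu> = sets (restrict_space borel S)" and pr: "prob_space \<mu>"
    and cv: "\<And>z n. z \<in> S \<Longrightarrow> n \<ge> 1 \<Longrightarrow> measure \<mu> (cyl S n z) = b n z"
  shows "distr \<mu> M0 (\<lambda>x. x) = M0"
  unfolding M0_def
proof (rule P.PiM_eq)
  show "sets (distr \<mu> (Pi\<^sub>M UNIV (\<lambda>_. measure_pmf Pm)) (\<lambda>x. x)) = sets (Pi\<^sub>M UNIV (\<lambda>_. measure_pmf Pm))"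
    by simp
  fix J :: "nat set" and F :: "nat \<Rightarrow> nat set"
  assume J: "finite J"
  have sp: "space \<mu> = S" using sets_eq_imp_space_eq[OF sets] by (simp add: space_restrict_space)
  have idm: "(\<lambda>x. x) \<in> measurable \<mu> M0"
  proof -
    have "(\<lambda>x. x) \<in> measurable (restrict_space borel S) borel"
      by (intro measurable_restrict_space1) simp
    then show ?thesis by (simp add: measurable_cong_sets[OF sets sets_M0])
  qed
  define n where "n = Suc (Max (insert 0 J))"
  have Jn: "J \<subseteq> {..<n}" using J by (auto simp: n_def le_imp_less_Suc)
  have n1: "n \<ge> 1" by (simp add: n_def)
  have rs: "{x. \<forall>j\<in>J. x j \<in> F j} \<in> sets M0" using rect_sets[OF J] by (simp add: sets_M0)
  have "emeasure (distr \<mu> M0 (\<lambda>x. x)) {x. \<forall>j\<in>J. x j \<in> F j}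
      = emeasure \<mu> (S \<inter> {x. \<forall>j\<in>J. x j \<in> F j})"
    using idm rs by (subst emeasure_distr) (auto simp: sp Int_commute)
  also have "\<dots> = ennreal (measure \<mu> (S \<inter> {x. \<forall>j\<in>J. x j \<in> F j}))"
    using prob_space.finite_measure[OF pr] by (simp add: finite_measure.emeasure_eq_measure)
  also have "measure \<mu> (S \<inter> {x. \<forall>j\<in>J. x j \<in> F j}) = (\<integral>x. indicator (S \<inter> {x. \<forall>j\<in>J. x j \<in> F j}) x \<partial>\<mu>)"
  proof -
    have "S \<inter> {x. \<forall>j\<in>J. x j \<in> F j} \<inter> S = S \<inter> {x. \<forall>j\<in>J. x j \<in> F j}" by blast
    then show ?thesis by (simp add: sp)
  qed
  also have "\<dots> = (\<Sum>w\<in>W n. indicator (S \<inter> {x. \<forall>j\<in>J. x j \<in> F j}) (ext n w) * measure \<mu> (cyl S n (ext n w)))"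
    using Jn by (intro int_decomp[OF sets prob_space.finite_measure[OF pr]]) (auto simp: indicator_def subset_iff)
  also have "\<dots> = (\<Sum>w\<in>W n. indicator (S \<inter> {x. \<forall>j\<in>J. x j \<in> F j}) (ext n w) * b n (ext n w))"
    using cv ext_S n1 by (intro sum.cong refl) auto
  also have "\<dots> = (\<Prod>j\<in>J. measure Pm (F j))" by (rule rect_sum[OF Jn])
  finally show "emeasure (distr \<mu> (Pi\<^sub>M UNIV (\<lambda>_. measure_pmf Pm)) (\<lambda>x. x))
       (prod_emb UNIV (\<lambda>_. measure_pmf Pm) J (Pi\<^sub>E J F)) = (\<Prod>j\<in>J. emeasure (measure_pmf Pm) (F j))"
    unfolding rect_eq M0_def[symmetric]
    by (simp add: measure_pmf.emeasure_eq_measure prod_ennreal)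
qed

lemma uniq_from_cyl:
  fixes \<mu> :: "(nat \<Rightarrow> nat) measure"
  assumes sets: "sets \<mu> = sets (restrict_space borel S)" and pr: "prob_space \<mu>"
    and cv: "\<And>z n. z \<in> S \<Longrightarrow> n \<ge> 1 \<Longrightarrow> measure \<mu> (cyl S n z) = b n z"
  shows "\<mu> = \<beta>"
proof (rule measure_eqI)
  show "sets \<mu> = sets \<beta>" using sets sets_beta by simp
  fix D assume D: "D \<in> sets \<mu>"
  then have D': "D \<subseteq> S" "D \<in> sets M0" using sets restrS_iff by auto
  have e: "emeasure \<nu> D = emeasure M0 D"
    if s: "sets \<nu> = sets (restrict_space borel S)" and p: "prob_space \<nu>"
      and c: "\<And>z n. z \<in> S \<Longrightarrow> n \<ge> 1 \<Longrightarrow> measure \<nu> (cyl S n z) = b n z" for \<nu>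
  proof -
    have sp: "space \<nu> = S" using sets_eq_imp_space_eq[OF s] by (simp add: space_restrict_space)
    have idm: "(\<lambda>x. x) \<in> measurable \<nu> M0"
    proof -
      have "(\<lambda>x. x) \<in> measurable (restrict_space borel S) borel"
        by (intro measurable_restrict_space1) simp
      then show ?thesis by (simp add: measurable_cong_sets[OF s sets_M0])
    qed
    have "emeasure \<nu> D = emeasure (distr \<nu> M0 (\<lambda>x. x)) D"
      using idm D' by (subst emeasure_distr) (auto simp: sp Int_absorb2)
    then show ?thesis using cyl_vals_M0[OF s p c] by simp
  qed
  show "emeasure \<mu> D = emeasure \<beta> D"
    using e[OF sets pr cv] e[OF sets_beta prob_beta measure_cyl_beta] by simp
qed

end

context bsys begin

lemma shift_S: "x \<in> S \<Longrightarrow> (\<lambda>i. x (i + m)) \<in> S"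
  by (auto simp: S_def)

lemma space_inv: "invariant_prob S \<mu> \<Longrightarrow> space \<mu> = S"
  unfolding invariant_prob_def
  using sets_eq_imp_space_eq by (fastforce simp: space_restrict_space)

lemma funpow_meas: "invariant_prob S \<mu> \<Longrightarrow> (sshift ^^ m) \<in> measurable \<mu> \<mu>"
proof (induction m)
  case 0 then show ?case by simp
next
  case (Suc m)
  then have "(sshift ^^ m) \<circ> sshift \<in> measurable \<mu> \<mu>"
    using invariant_prob_def measurable_comp by blast
  then show ?case by (simp only: funpow_Suc_right)
qed

lemma inv_iter:
  assumes inv: "invariant_prob S \<mu>" and D: "D \<in> sets \<mu>"
  shows "emeasure \<mu> ((sshift ^^ m) -` D \<inter> S) = emeasure \<mu> D"
proof (induction m)
  case 0 then show ?case
    using sets.sets_into_space[OF D] space_inv[OF inv] by (simp add: Int_absorb2)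
next
  case (Suc m)
  have sp: "space \<mu> = S" by (rule space_inv[OF inv])
  have m: "(sshift ^^ m) -` D \<inter> S \<in> sets \<mu>"
    using measurable_sets[OF funpow_meas[OF inv] D] sp by simp
  have "(sshift ^^ Suc m) -` D \<inter> S = sshift -` ((sshift ^^ m) -` D \<inter> S) \<inter> S"
    using S_shift by (auto simp: funpow_swap1)
  moreover have "emeasure \<mu> (sshift -` ((sshift ^^ m) -` D \<inter> S) \<inter> S) = emeasure \<mu> ((sshift ^^ m) -` D \<inter> S)"
    using inv m sp unfolding invariant_prob_def by metis
  ultimately have "emeasure \<mu> ((sshift ^^ Suc m) -` D \<inter> S) = emeasure \<mu> ((sshift ^^ m) -` D \<inter> S)"
    by simp
  then show ?case using Suc by (simp add: comp_def)
qed

lemma blk_div: "j * r \<le> i \<Longrightarrow> i < j * r + (r::nat) \<Longrightarrow> i div r = j"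
  by (metis add.commute div_nat_eqI mult.commute mult_Suc_right)

lemma blk_prod: "u \<in> S \<Longrightarrow> (\<Prod>i\<in>{j*r..<j*r+r}. measure Pm {u (i - j*r)}) = b r u"
proof -
  assume u: "u \<in> S"
  have "(\<Prod>i\<in>{j*r..<j*r+r}. measure Pm {u (i - j*r)}) = (\<Prod>i\<in>{0+j*r..<r+j*r}. measure Pm {u (i - j*r)})"
    by (simp add: add.commute)
  also have "\<dots> = (\<Prod>i\<in>{0..<r}. measure Pm {u i})" by (subst prod.shift_bounds_nat_ivl) simp
  also have "\<dots> = b r u" using u by (simp add: b_def meas_Pm S_def atLeast0LessThan)
  finally show ?thesis .
qed

end

context bsys begin

lemma sq_expand:
  fixes D :: "nat \<Rightarrow> (nat \<Rightarrow> nat) set" and c :: real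
  shows "(\<Sum>j<N. indicator (D j) x - c)\<^sup>2 =
    (\<Sum>j<N. \<Sum>j'<N. indicator (D j \<inter> D j') x - c * indicator (D j) x - c * indicator (D j') x + c * c)"
proof -
  have "(\<Sum>j<N. indicator (D j) x - c)\<^sup>2 = (\<Sum>j<N. \<Sum>j'<N. (indicator (D j) x - c) * (indicator (D j') x - c))"
    by (simp add: power2_eq_square sum_product)
  also have "\<dots> = (\<Sum>j<N. \<Sum>j'<N. indicator (D j \<inter> D j') x - c * indicator (D j) x - c * indicator (D j') x + c * c)"
    by (intro sum.cong refl) (simp add: indicator_inter_arith algebra_simps)
  finally show ?thesis .
qed

lemma sq_integral:
  fixes D :: "nat \<Rightarrow> (nat \<Rightarrow> nat) set" and c :: real and \<nu> :: "(nat \<Rightarrow> nat) measure"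
  assumes pr: "prob_space \<nu>" and D: "\<And>j. D j \<in> sets \<nu>"
  shows "integrable \<nu> (\<lambda>x. (\<Sum>j<N. indicator (D j) x - c)\<^sup>2)"
    and "(\<integral>x. (\<Sum>j<N. indicator (D j) x - c)\<^sup>2 \<partial>\<nu>) =
      (\<Sum>j<N. \<Sum>j'<N. measure \<nu> (D j \<inter> D j') - c * measure \<nu> (D j) - c * measure \<nu> (D j') + c * c)"
    and "integrable \<nu> (\<lambda>x. (\<Sum>j<N. indicator (D j) x - c))"
    and "(\<integral>x. (\<Sum>j<N. indicator (D j) x - c) \<partial>\<nu>) = (\<Sum>j<N. measure \<nu> (D j) - c)"
proof -
  interpret prob_space \<nu> by (rule pr)
  have DD: "D j \<inter> D j' \<in> sets \<nu>" for j j' using D by auto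
  have i1: "integrable \<nu> (indicator (D j) :: _ \<Rightarrow> real)" for j using D by (intro integrable_real_indicator) (auto simp: less_top[symmetric])
  have i2: "integrable \<nu> (indicator (D j \<inter> D j') :: _ \<Rightarrow> real)" for j j' using DD by (intro integrable_real_indicator) (auto simp: less_top[symmetric])
  have ii: "integrable \<nu> (\<lambda>x. indicator (D j \<inter> D j') x - c * indicator (D j) x - c * indicator (D j') x + c * c)" for j j'
    using i1 i2 by auto
  show "integrable \<nu> (\<lambda>x. (\<Sum>j<N. indicator (D j) x - c)\<^sup>2)"
    unfolding sq_expand using ii by (intro Bochner_Integration.integrable_sum) auto
  have "(\<integral>x. (\<Sum>j<N. indicator (D j) x - c)\<^sup>2 \<partial>\<nu>) =
     (\<integral>x. (\<Sum>j<N. \<Sum>j'<N. indicator (D j \<inter> D j') x - c * indicator (D j) x - c * indicator (D j') x + c * c) \<partial>\<nu>)"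
    unfolding sq_expand ..
  also have "\<dots> = (\<Sum>j<N. \<Sum>j'<N. (\<integral>x. indicator (D j \<inter> D j') x - c * indicator (D j) x - c * indicator (D j') x + c * c \<partial>\<nu>))"
    using ii by (simp add: Bochner_Integration.integral_sum Bochner_Integration.integrable_sum)
  also have "\<dots> = (\<Sum>j<N. \<Sum>j'<N. measure \<nu> (D j \<inter> D j') - c * measure \<nu> (D j) - c * measure \<nu> (D j') + c * c)"
    using i1 i2 D DD by (intro sum.cong refl) (simp add: Int_absorb2 sets.sets_into_space prob_space)
  finally show "(\<integral>x. (\<Sum>j<N. indicator (D j) x - c)\<^sup>2 \<partial>\<nu>) =
      (\<Sum>j<N. \<Sum>j'<N. measure \<nu> (D j \<inter> D j') - c * measure \<nu> (D j) - c * measure \<nu> (D j') + c * c)" .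
  show "integrable \<nu> (\<lambda>x. (\<Sum>j<N. indicator (D j) x - c))"
    using i1 by (intro Bochner_Integration.integrable_sum) auto
  show "(\<integral>x. (\<Sum>j<N. indicator (D j) x - c) \<partial>\<nu>) = (\<Sum>j<N. measure \<nu> (D j) - c)"
    using i1 D by (simp add: Bochner_Integration.integral_sum Int_absorb2 sets.sets_into_space prob_space)
qed

end

context bsys begin

lemma core:
  fixes \<mu> :: "(nat \<Rightarrow> nat) measure"
  assumes inv: "invariant_prob S \<mu>"
    and bound: "\<And>z n. z \<in> S \<Longrightarrow> n \<ge> 1 \<Longrightarrow> measure \<mu> (cyl S n z) \<le> C * b n z"
    and u: "u \<in> S" and r: "r \<ge> 1"
  shows "measure \<mu> (cyl S r u) = b r u"
proof -
  define c where "c = b r u"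
  define mc where "mc = measure \<mu> (cyl S r u)"
  define D where "D j = {x\<in>S. \<forall>t<r. x (t + j*r) = u t}" for j
  have sets_mu: "sets \<mu> = sets (restrict_space borel S)" and pr: "prob_space \<mu>"
    using inv by (auto simp: invariant_prob_def)
  have sp: "space \<mu> = S" by (rule space_inv[OF inv])
  have Dpre: "D j = (sshift ^^ (j*r)) -` cyl S r u \<inter> S" for j
    unfolding D_def cyl_def funpow_sshift using shift_S by auto
  have Dsets: "D j \<in> sets \<nu>" if "invariant_prob S \<nu>" for j \<nu>
  proof -
    have "cyl S r u \<in> sets \<nu>" using that cyl_sets by (simp add: invariant_prob_def)
    then show ?thesis using measurable_sets[OF funpow_meas[OF that]] space_inv[OF that]
      by (simp add: Dpre)
  qed
  have mD: "measure \<mu> (D j) = mc" for j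
  proof -
    have "cyl S r u \<in> sets \<mu>" using cyl_sets sets_mu by simp
    then show ?thesis using inv_iter[OF inv] by (simp add: Dpre mc_def measure_def)
  qed
  define B where "B j = {j*r..<j*r+r}" for j
  have rectD: "D j = S \<inter> {x. \<forall>i\<in>B j. x i \<in> {u (i - j*r)}}" for j
  proof -
    have "(\<forall>t<r. x (t + j*r) = u t) \<longleftrightarrow> (\<forall>i\<in>B j. x i \<in> {u (i - j*r)})" for x
    proof
      assume h: "\<forall>t<r. x (t + j*r) = u t"
      show "\<forall>i\<in>B j. x i \<in> {u (i - j*r)}"
      proof
        fix i assume "i \<in> B j"
        then have "i - j*r < r" "i - j*r + j*r = i" by (auto simp: B_def)
        then show "x i \<in> {u (i - j*r)}" using h[rule_format, of "i - j*r"] by simp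
      qed
    next
      assume h: "\<forall>i\<in>B j. x i \<in> {u (i - j*r)}"
      show "\<forall>t<r. x (t + j*r) = u t"
      proof (intro allI impI)
        fix t assume "t < r"
        then have "t + j*r \<in> B j" by (auto simp: B_def)
        then show "x (t + j*r) = u t" using h[rule_format, of "t + j*r"] by simp
      qed
    qed
    then show ?thesis unfolding D_def by blast
  qed
  have bD: "measure \<beta> (D j) = c" for j
  proof -
    have "measure \<beta> (D j) = (\<Prod>i\<in>B j. measure Pm {u (i - j*r)})"
      unfolding rectD by (rule measure_rect_S) (simp add: B_def)
    also have "\<dots> = c" unfolding c_def B_def by (rule blk_prod[OF u])
    finally show ?thesis .
  qed
  have disj: "B j \<inter> B j' = {}" if jj: "j \<noteq> j'" for j j'
  proof (rule ccontr)
    assume "B j \<inter> B j' \<noteq> {}"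
    then obtain i where i: "i \<in> B j" "i \<in> B j'" by blast
    from i(1) have "j*r \<le> i" "i < j*r + r" unfolding B_def by simp_all
    then have "i div r = j" by (rule blk_div)
    moreover from i(2) have "j'*r \<le> i" "i < j'*r + r" unfolding B_def by simp_all
    then have "i div r = j'" by (rule blk_div)
    ultimately show False using jj by simp
  qed
  have bDD: "measure \<beta> (D j \<inter> D j') = c * c" if jj: "j \<noteq> j'" for j j'
  proof -
    define G where "G i = (if i \<in> B j then {u (i - j*r)} else {u (i - j'*r)})" for i
    have G1: "G i = {u (i - j*r)}" if "i \<in> B j" for i using that by (simp add: G_def)
    have G2: "G i = {u (i - j'*r)}" if "i \<in> B j'" for i using that disj[OF jj] by (auto simp: G_def)
    have Deq: "D j \<inter> D j' = S \<inter> {x. \<forall>i\<in>B j \<union> B j'. x i \<in> G i}"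
      unfolding rectD using G1 G2 by auto (metis Un_iff singletonD)+
    have "measure \<beta> (D j \<inter> D j') = (\<Prod>i\<in>B j \<union> B j'. measure Pm (G i))"
      unfolding Deq by (rule measure_rect_S) (simp add: B_def)
    also have "\<dots> = (\<Prod>i\<in>B j. measure Pm (G i)) * (\<Prod>i\<in>B j'. measure Pm (G i))"
      using disj[OF jj] by (intro prod.union_disjoint) (auto simp: B_def)
    also have "(\<Prod>i\<in>B j. measure Pm (G i)) = c"
      unfolding c_def using blk_prod[OF u, of j r] by (simp add: G_def B_def)
    also have "(\<Prod>i\<in>B j'. measure Pm (G i)) = c"
    proof -
      have "(\<Prod>i\<in>B j'. measure Pm (G i)) = (\<Prod>i\<in>B j'. measure Pm {u (i - j'*r)})"
        using G2 by (intro prod.cong refl) simp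
      then show ?thesis unfolding c_def using blk_prod[OF u, of j' r] by (simp add: B_def)
    qed
    finally show ?thesis .
  qed
  define X where "X N x = (\<Sum>j<N. indicator (D j) x - c)" for N x
  have key: "real N * (mc - c)\<^sup>2 \<le> C" if N: "N \<ge> 1" for N
  proof -
    interpret M: prob_space \<mu> by (rule pr)
    note sqm = sq_integral[OF pr Dsets[OF inv], where N=N and c=c]
    note sqb = sq_integral[OF prob_beta Dsets[OF inv_beta], where N=N and c=c]
    have e1: "(\<integral>x. X N x \<partial>\<mu>) = real N * (mc - c)"
      unfolding X_def sqm(4) mD by simp
    have e2: "(\<integral>x. (X N x)\<^sup>2 \<partial>\<beta>) = real N * (c - c * c)"
    proof -
      have "(\<integral>x. (X N x)\<^sup>2 \<partial>\<beta>) = (\<Sum>j<N. \<Sum>j'<N. if j = j' then c - c * c else 0)"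
        unfolding X_def sqb(2) using bD bDD by (intro sum.cong refl) auto
      also have "\<dots> = real N * (c - c * c)" by simp
      finally show ?thesis .
    qed
    have "(\<integral>x. X N x \<partial>\<mu>)\<^sup>2 \<le> (\<integral>x. (X N x)\<^sup>2 \<partial>\<mu>)"
      using M.variance_eq[of "X N"] M.variance_positive[of "X N"] sqm(1,3)
      unfolding X_def by simp
    also have "\<dots> \<le> C * (\<integral>x. (X N x)\<^sup>2 \<partial>\<beta>)"
    proof (rule int_le[OF sets_mu pr bound, of "N * r"])
      show "1 \<le> N * r" using N r by simp
      fix x y assume xy: "x \<in> S" "y \<in> S" and agree: "\<And>j. j < N * r \<Longrightarrow> x j = y j"
      have "indicator (D j) x = (indicator (D j) y :: real)" if "j < N" for j
      proof -
        have "x (t + j*r) = y (t + j*r)" if "t < r" for t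
        proof (rule agree)
          have "t + j*r < r + j*r" using that by simp
          also have "\<dots> = Suc j * r" by simp
          also have "\<dots> \<le> N * r" using \<open>j < N\<close> by (intro mult_right_mono) auto
          finally show "t + j*r < N * r" .
        qed
        then show ?thesis using xy by (auto simp: D_def indicator_def)
      qed
      then show "(X N x)\<^sup>2 = (X N y)\<^sup>2" unfolding X_def by (metis (no_types, lifting) lessThan_iff sum.cong)
    qed (auto)
    also have "\<dots> = C * (real N * (c - c * c))" by (simp add: e2)
    also have "\<dots> \<le> C * (real N * 1)"
    proof -
      have "c - c * c \<le> 1" using zero_le_power2[of "c - 1/2"] by (simp add: power2_eq_square algebra_simps)
      moreover have "C \<ge> 0"
      proof -
        have "0 \<le> measure \<mu> (cyl S 1 u)" by simp
        also have "\<dots> \<le> C * b 1 u" using bound[OF u] by simp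
        finally have h: "0 \<le> C * b 1 u" .
        have "u 0 \<in> A" using u by (simp add: S_def)
        then have "b 1 u > 0" using q_pos by (simp add: b_def)
        then show ?thesis using h by (simp add: zero_le_mult_iff)
      qed
      ultimately show ?thesis by (intro mult_left_mono) auto
    qed
    finally have "(real N * (mc - c))\<^sup>2 \<le> C * real N" using e1 by simp
    then have "real N * (real N * (mc - c)\<^sup>2) \<le> real N * C"
      by (simp add: power_mult_distrib power2_eq_square algebra_simps)
    then show ?thesis using N by simp
  qed
  show ?thesis
  proof (rule ccontr)
    assume "measure \<mu> (cyl S r u) \<noteq> b r u"
    then have pos: "(mc - c)\<^sup>2 > 0" by (simp add: mc_def c_def)
    obtain N :: nat where N: "C / (mc - c)\<^sup>2 < real N" using reals_Archimedean2 by blast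
    define N' where "N' = max N 1"
    have "C / (mc - c)\<^sup>2 < real N'" using N by (simp add: N'_def)
    then have "C < real N' * (mc - c)\<^sup>2" using pos by (simp add: divide_less_eq)
    moreover have "real N' * (mc - c)\<^sup>2 \<le> C" by (rule key) (simp add: N'_def)
    ultimately show False by simp
  qed
qed

end

context bsys begin

lemma b_pos: "z \<in> S \<Longrightarrow> b n z > 0"
  unfolding b_def S_def using q_pos by (intro prod_pos) auto

lemma bsum_S:
  assumes h: "\<forall>x\<in>S. \<phi> x = \<Phi> (x 0)" and z: "z \<in> S"
  shows "bsum \<phi> n z = (\<Sum>i<n. \<Phi> (z i))"
  unfolding bsum_def funpow_sshift using h shift_S[OF z] by (intro sum.cong) auto

lemma expb:
  assumes h: "\<forall>x\<in>S. \<phi> x = \<Phi> (x 0)" and z: "z \<in> S"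
  shows "exp (- real n * ln Zs + bsum \<phi> n z) = b n z"
proof -
  have "exp (- real n * ln Zs + bsum \<phi> n z) = exp (bsum \<phi> n z) / exp (real n * ln Zs)"
    by (simp add: exp_diff)
  also have "exp (real n * ln Zs) = Zs ^ n"
    using Zs_pos by (simp add: exp_of_nat_mult)
  also have "exp (bsum \<phi> n z) = (\<Prod>i<n. exp (\<Phi> (z i)))"
    by (simp add: bsum_S[OF h z] exp_sum)
  also have "(\<Prod>i<n. exp (\<Phi> (z i))) / Zs ^ n = (\<Prod>i<n. exp (\<Phi> (z i)) / Zs)"
    by (simp add: prod_dividef)
  also have "\<dots> = b n z" unfolding b_def using z by (intro prod.cong refl) (auto simp: q_def S_def)
  finally show ?thesis .
qed

lemma cyl_sum:
  assumes h: "\<forall>x\<in>S. \<phi> x = \<Phi> (x 0)"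
  shows "(\<Sum>C\<in>cylinders S n. (SUP z\<in>C. exp (bsum \<phi> n z))) = Zs ^ n"
proof -
  have cyls: "cylinders S n = (\<lambda>w. cyl S n (ext n w)) ` W n"
  proof
    show "cylinders S n \<subseteq> (\<lambda>w. cyl S n (ext n w)) ` W n"
    proof
      fix C assume "C \<in> cylinders S n"
      then obtain z where z: "z \<in> S" "C = cyl S n z" by (auto simp: cylinders_def)
      have "cyl S n z = cyl S n (ext n (restrict z {..<n}))"
        by (auto simp: cyl_def ext_def)
      then show "C \<in> (\<lambda>w. cyl S n (ext n w)) ` W n" using z restr_W by blast
    qed
    show "(\<lambda>w. cyl S n (ext n w)) ` W n \<subseteq> cylinders S n"
      using ext_S by (auto simp: cylinders_def)
  qed
  have inj: "inj_on (\<lambda>w. cyl S n (ext n w)) (W n)"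
  proof
    fix w w' assume w: "w \<in> W n" "w' \<in> W n" and e: "cyl S n (ext n w) = cyl S n (ext n w')"
    have "ext n w \<in> cyl S n (ext n w)" using ext_S[OF w(1)] by (simp add: cyl_def)
    then have "ext n w \<in> cyl S n (ext n w')" using e by simp
    then have "restrict (ext n w) {..<n} = w'" using mem_cyl_ext[OF w(2) ext_S[OF w(1)]] by simp
    moreover have "restrict (ext n w) {..<n} = w" using w(1)
      by (auto simp: ext_def W_def PiE_iff extensional_def fun_eq_iff)
    ultimately show "w = w'" by simp
  qed
  have sup: "(SUP z\<in>cyl S n (ext n w). exp (bsum \<phi> n z)) = (\<Prod>i<n. exp (\<Phi> (w i)))" if w: "w \<in> W n" for w
  proof -
    have "(SUP z\<in>cyl S n (ext n w). exp (bsum \<phi> n z)) = (SUP z\<in>cyl S n (ext n w). (\<Prod>i<n. exp (\<Phi> (w i))))"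
    proof (rule SUP_cong[OF refl])
      fix z assume z: "z \<in> cyl S n (ext n w)"
      then have "z \<in> S" "\<And>i. i < n \<Longrightarrow> z i = w i" by (auto simp: cyl_def ext_def)
      then show "exp (bsum \<phi> n z) = (\<Prod>i<n. exp (\<Phi> (w i)))"
        by (simp add: bsum_S[OF h] exp_sum)
    qed
    also have "\<dots> = (\<Prod>i<n. exp (\<Phi> (w i)))"
      using ext_S[OF w] by (intro cSUP_const) (auto simp: cyl_def)
    finally show ?thesis .
  qed
  have "(\<Sum>C\<in>cylinders S n. (SUP z\<in>C. exp (bsum \<phi> n z))) = (\<Sum>w\<in>W n. (\<Prod>i<n. exp (\<Phi> (w i))))"
    unfolding cyls using inj sup by (simp add: sum.reindex)
  also have "\<dots> = (\<Prod>i<n. \<Sum>a\<in>A. exp (\<Phi> a))"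
    unfolding W_def using finA by (subst prod_sum_PiE) auto
  also have "\<dots> = Zs ^ n" by (simp add: Zs_def)
  finally show ?thesis .
qed

lemma pressure_S:
  assumes h: "\<forall>x\<in>S. \<phi> x = \<Phi> (x 0)"
  shows "pressure S \<phi> = ln Zs"
proof -
  have "(\<lambda>n. ln (\<Sum>C\<in>cylinders S n. (SUP z\<in>C. exp (bsum \<phi> n z))) / real n) \<longlonglongrightarrow> ln Zs"
  proof (rule tendsto_eventually)
    show "\<forall>\<^sub>F n in sequentially. ln (\<Sum>C\<in>cylinders S n. (SUP z\<in>C. exp (bsum \<phi> n z))) / real n = ln Zs"
      unfolding eventually_sequentially
      using Zs_pos by (intro exI[of _ 1]) (auto simp: cyl_sum[OF h] ln_realpow)
  qed
  then show ?thesis unfolding pressure_def by (rule limI)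
qed

lemma gibbsI:
  assumes h: "\<forall>x\<in>S. \<phi> x = \<Phi> (x 0)" and inv: "invariant_prob S \<mu>"
    and cv: "\<And>z n. z \<in> S \<Longrightarrow> n \<ge> 1 \<Longrightarrow> measure \<mu> (cyl S n z) = b n z"
  shows "gibbs S \<phi> \<mu>"
  unfolding gibbs_def
proof (intro conjI exI[of _ "2::real"] ballI allI impI inv)
  fix z and n :: nat assume z: "z \<in> S" and n: "1 \<le> n"
  have e: "exp (- real n * pressure S \<phi> + bsum \<phi> n z) = b n z"
    unfolding pressure_S[OF h] by (rule expb[OF h z])
  have r1: "measure \<mu> (cyl S n z) / exp (- real n * pressure S \<phi> + bsum \<phi> n z) = 1"
  proof -
    have eq: "measure \<mu> (cyl S n z) = exp (- real n * pressure S \<phi> + bsum \<phi> n z)"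
      using cv[OF z n] e by simp
    show ?thesis unfolding eq by simp
  qed
  show "inverse 2 < measure \<mu> (cyl S n z) / exp (- real n * pressure S \<phi> + bsum \<phi> n z)"
    "measure \<mu> (cyl S n z) / exp (- real n * pressure S \<phi> + bsum \<phi> n z) < 2" unfolding r1 by simp_all
qed simp

lemma gibbs_beta: "\<forall>x\<in>S. \<phi> x = \<Phi> (x 0) \<Longrightarrow> gibbs S \<phi> \<beta>"
  by (rule gibbsI[OF _ inv_beta measure_cyl_beta])

lemma gibbs_unique:
  assumes h: "\<forall>x\<in>S. \<phi> x = \<Phi> (x 0)" and g: "gibbs S \<phi> \<mu>"
  shows "\<mu> = \<beta>"
proof -
  from g obtain C0 where inv: "invariant_prob S \<mu>" and C0: "C0 > 0"
    and bnd: "\<And>z n. z \<in> S \<Longrightarrow> n \<ge> 1 \<Longrightarrow>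
        measure \<mu> (cyl S n z) / exp (- real n * pressure S \<phi> + bsum \<phi> n z) < C0"
    unfolding gibbs_def by blast
  have bound: "measure \<mu> (cyl S n z) \<le> C0 * b n z" if z: "z \<in> S" and n: "n \<ge> 1" for z n
  proof -
    have e: "exp (- real n * pressure S \<phi> + bsum \<phi> n z) = b n z"
      unfolding pressure_S[OF h] by (rule expb[OF h z])
    have "measure \<mu> (cyl S n z) / b n z < C0"
      using bnd[OF z n] unfolding e .
    then show ?thesis using b_pos[OF z, of n] by (simp add: divide_less_eq)
  qed
  have sets: "sets \<mu> = sets (restrict_space borel S)" and pr: "prob_space \<mu>"
    using inv by (auto simp: invariant_prob_def)
  show ?thesis
    by (rule uniq_from_cyl[OF sets pr core[OF inv bound]]) auto
qed

lemma ex1_gibbs: "\<forall>x\<in>S. \<phi> x = \<Phi> (x 0) \<Longrightarrow> \<exists>!\<mu>. gibbs S \<phi> \<mu>"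
  using gibbs_beta gibbs_unique by blast

end

definition "Gf k p F b = (\<Sum>a\<in>{a\<in>{1..k}. p a = b}. exp (F a :: real))"

lemma full_shift_bsum:
  assumes Fh: "\<forall>x\<in>full_shift k. f x = F (x 0)" and x: "x \<in> full_shift k"
  shows "bsum f n x = (\<Sum>i<n. F (x i))"
  unfolding bsum_def funpow_sshift using Fh x by (intro sum.cong) (auto simp: full_shift_def)

lemma gbar_formula:
  fixes k :: nat and p :: "nat \<Rightarrow> nat" and \<pi> :: "(nat \<Rightarrow> nat) \<Rightarrow> (nat \<Rightarrow> nat)"
  assumes p: "\<forall>x\<in>full_shift k. \<forall>i. \<pi> x i = p (x i)"
    and Fh: "\<forall>x\<in>full_shift k. f x = F (x 0)"
    and Y: "\<pi> ` full_shift k = Y" and y: "y \<in> Y" and k: "k \<ge> 1"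
  shows "gbar (full_shift k) Y \<pi> f n y = (\<Prod>i<n. Gf k p F (y i))"
proof -
  define X where "X = full_shift k"
  define R where "R i = {a\<in>{1..k}. p a = y i}" for i
  define Wd where "Wd = PiE {..<n} R"
  define ex where "ex w = (\<lambda>i. if i < n then w i else (1::nat))" for w :: "nat \<Rightarrow> nat"
  define cond where "cond x \<longleftrightarrow> (\<forall>i<n. p (x i) = y i)" for x :: "nat \<Rightarrow> nat"
  have piY: "\<pi> x \<in> Y" if "x \<in> X" for x using Y that by (auto simp: X_def)
  have adm_iff: "cyl X n x \<in> adm_cyls X Y \<pi> n y \<longleftrightarrow> cond x" if x: "x \<in> X" for x
  proof
    assume "cyl X n x \<in> adm_cyls X Y \<pi> n y"
    then have "\<pi> x \<in> cyl Y n y" using x by (auto simp: adm_cyls_def cyl_def)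
    then show "cond x" using p x by (auto simp: cond_def cyl_def X_def)
  next
    assume c: "cond x"
    have "\<pi> ` cyl X n x \<subseteq> cyl Y n y"
    proof
      fix z assume "z \<in> \<pi> ` cyl X n x"
      then obtain x' where x': "x' \<in> X" "\<forall>i<n. x' i = x i" "z = \<pi> x'" by (auto simp: cyl_def)
      then show "z \<in> cyl Y n y" using piY p c by (auto simp: cyl_def cond_def X_def)
    qed
    moreover have "cyl X n x \<in> cylinders X n" using x by (auto simp: cylinders_def)
    ultimately show "cyl X n x \<in> adm_cyls X Y \<pi> n y" by (simp add: adm_cyls_def)
  qed
  have adm_form: "\<exists>x\<in>X. C = cyl X n x \<and> cond x" if "C \<in> adm_cyls X Y \<pi> n y" for C
  proof -
    from that obtain x where x: "x \<in> X" "C = cyl X n x" by (auto simp: adm_cyls_def cylinders_def)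
    then show ?thesis using adm_iff that by auto
  qed
  have ex_X: "ex w \<in> X" if "w \<in> Wd" for w
    using that k by (auto simp: ex_def X_def full_shift_def Wd_def R_def PiE_iff)
  have ex_cond: "cond (ex w)" if "w \<in> Wd" for w
    using that by (auto simp: ex_def cond_def Wd_def R_def PiE_iff)
  have ex_mem: "x \<in> cyl X n (ex w) \<longleftrightarrow> x \<in> X \<and> restrict x {..<n} = w" if w: "w \<in> Wd" for x w
    using w by (auto simp: cyl_def ex_def Wd_def PiE_iff extensional_def fun_eq_iff)
  have cond_cyl: "cond x'" if "x' \<in> cyl X n x" "cond x" for x x'
    using that by (auto simp: cond_def cyl_def)
  have restr_Wd: "restrict x {..<n} \<in> Wd" if "x \<in> X" "cond x" for x
    using that by (auto simp: Wd_def R_def cond_def X_def full_shift_def)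
  have sumE: "(\<Sum>x\<in>E. exp (bsum f n x)) = (\<Prod>i<n. Gf k p F (y i))" if E: "E_set X Y \<pi> n y E" for E
  proof -
    have Esub: "E \<subseteq> \<Union>(adm_cyls X Y \<pi> n y)" and Ecard: "\<And>C. C \<in> adm_cyls X Y \<pi> n y \<Longrightarrow> card (E \<inter> C) = 1"
      using E by (auto simp: E_set_def)
    have EX: "x \<in> X \<and> cond x" if xE: "x \<in> E" for x
    proof -
      obtain C where "C \<in> adm_cyls X Y \<pi> n y" "x \<in> C" using Esub xE by blast
      then obtain x0 where "x0 \<in> X" "C = cyl X n x0" "cond x0" using adm_form by blast
      then show ?thesis using \<open>x \<in> C\<close> cond_cyl by (auto simp: cyl_def)
    qed
    have bij: "bij_betw (\<lambda>x. restrict x {..<n}) E Wd"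
    proof (rule bij_betwI')
      fix x x' assume xx: "x \<in> E" "x' \<in> E"
      show "(restrict x {..<n} = restrict x' {..<n}) = (x = x')"
      proof
        assume eq: "restrict x {..<n} = restrict x' {..<n}"
        have C: "cyl X n x \<in> adm_cyls X Y \<pi> n y" using EX[OF xx(1)] adm_iff by blast
        have "x \<in> E \<inter> cyl X n x" "x' \<in> E \<inter> cyl X n x"
          using xx EX[OF xx(1)] EX[OF xx(2)] eq by (auto simp: cyl_def fun_eq_iff restrict_def split: if_splits)
        moreover obtain z where "E \<inter> cyl X n x = {z}" using Ecard[OF C] by (auto simp: card_1_singleton_iff)
        ultimately show "x = x'" by (metis singletonD)
      qed simp
    next
      fix x assume "x \<in> E" then show "restrict x {..<n} \<in> Wd" using EX restr_Wd by blast
    next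
      fix w assume w: "w \<in> Wd"
      have C: "cyl X n (ex w) \<in> adm_cyls X Y \<pi> n y" using adm_iff ex_X[OF w] ex_cond[OF w] by blast
      then obtain x where "E \<inter> cyl X n (ex w) = {x}" using Ecard[OF C] by (auto simp: card_1_singleton_iff)
      then have "x \<in> E" "x \<in> cyl X n (ex w)" by auto
      then show "\<exists>x\<in>E. w = restrict x {..<n}" using ex_mem[OF w] by auto
    qed
    have "(\<Sum>x\<in>E. exp (bsum f n x)) = (\<Sum>x\<in>E. \<Prod>i<n. exp (F (x i)))"
      using EX Fh by (intro sum.cong refl) (simp add: full_shift_bsum X_def exp_sum)
    also have "\<dots> = (\<Sum>x\<in>E. (\<lambda>w. \<Prod>i<n. exp (F (w i))) (restrict x {..<n}))"
      by (intro sum.cong refl) simp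
    also have "\<dots> = (\<Sum>w\<in>Wd. \<Prod>i<n. exp (F (w i)))"
      by (rule sum.reindex_bij_betw[OF bij])
    also have "\<dots> = (\<Prod>i<n. \<Sum>a\<in>R i. exp (F a))"
      unfolding Wd_def by (subst prod_sum_PiE) (auto simp: R_def)
    also have "\<dots> = (\<Prod>i<n. Gf k p F (y i))" by (simp add: R_def Gf_def)
    finally show ?thesis .
  qed
  have Eex: "E_set X Y \<pi> n y (ex ` Wd)"
    unfolding E_set_def
  proof (intro conjI ballI)
    show "ex ` Wd \<subseteq> \<Union>(adm_cyls X Y \<pi> n y)"
    proof
      fix x assume "x \<in> ex ` Wd"
      then obtain w where w: "w \<in> Wd" "x = ex w" by blast
      then have "x \<in> cyl X n (ex w)" using ex_X by (auto simp: cyl_def)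
      then show "x \<in> \<Union>(adm_cyls X Y \<pi> n y)" using adm_iff ex_X[OF w(1)] ex_cond[OF w(1)] by blast
    qed
    fix C assume "C \<in> adm_cyls X Y \<pi> n y"
    then obtain x0 where x0: "x0 \<in> X" "C = cyl X n x0" "cond x0" using adm_form by blast
    have w0: "restrict x0 {..<n} \<in> Wd" using restr_Wd x0 by blast
    have "ex ` Wd \<inter> C = {ex (restrict x0 {..<n})}"
    proof
      show "ex ` Wd \<inter> C \<subseteq> {ex (restrict x0 {..<n})}"
      proof
        fix x assume "x \<in> ex ` Wd \<inter> C"
        then obtain w where w: "w \<in> Wd" "x = ex w" "ex w \<in> cyl X n x0" using x0 by blast
        then have "w = restrict x0 {..<n}"
          by (auto simp: cyl_def ex_def Wd_def PiE_iff extensional_def fun_eq_iff)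
        then show "x \<in> {ex (restrict x0 {..<n})}" using w by simp
      qed
      show "{ex (restrict x0 {..<n})} \<subseteq> ex ` Wd \<inter> C"
        using w0 ex_X[OF w0] x0 by (auto simp: cyl_def ex_def)
    qed
    then show "card (ex ` Wd \<inter> C) = 1" by simp
  qed
  have "{(\<Sum>x\<in>E. exp (bsum f n x)) | E. E_set X Y \<pi> n y E} = {\<Prod>i<n. Gf k p F (y i)}"
  proof (rule set_eqI, rule iffI)
    fix v assume "v \<in> {(\<Sum>x\<in>E. exp (bsum f n x)) | E. E_set X Y \<pi> n y E}"
    then obtain E where "v = (\<Sum>x\<in>E. exp (bsum f n x))" "E_set X Y \<pi> n y E" by blast
    then show "v \<in> {\<Prod>i<n. Gf k p F (y i)}" using sumE by simp
  next
    fix v assume "v \<in> {\<Prod>i<n. Gf k p F (y i)}"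
    then have "v = (\<Sum>x\<in>ex ` Wd. exp (bsum f n x))" using sumE[OF Eex] by simp
    then show "v \<in> {(\<Sum>x\<in>E. exp (bsum f n x)) | E. E_set X Y \<pi> n y E}" using Eex by blast
  qed
  then show ?thesis unfolding gbar_def X_def[symmetric] by simp
qed

theorem proposition6p1:
  fixes k l :: nat and Y :: "(nat \<Rightarrow> nat) set"
    and \<pi> :: "(nat \<Rightarrow> nat) \<Rightarrow> (nat \<Rightarrow> nat)" and f :: "(nat \<Rightarrow> nat) \<Rightarrow> real"
  assumes "k \<ge> 1"
    and "subshift l Y"
    and "one_block_factor (full_shift k) Y \<pi>"
    and "continuous_on (full_shift k) f"
    and "\<exists>F. \<forall>x\<in>full_shift k. f x = F (x 0)"
  shows "(\<forall>n\<ge>2. \<forall>y\<in>Y. gbar (full_shift k) Y \<pi> f n y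
            = gbar (full_shift k) Y \<pi> f 1 y * gbar (full_shift k) Y \<pi> f (n - 1) (sshift y))
    \<and> (\<forall>m. invariant_prob Y m \<longrightarrow>
          (\<lambda>n. (\<integral>y. ln (gbar (full_shift k) Y \<pi> f n y) \<partial>m) / real n)
            \<longlonglongrightarrow> (\<integral>y. ln (gbar (full_shift k) Y \<pi> f 1 y) \<partial>m))
    \<and> (\<exists>!\<mu>. gibbs (full_shift k) f \<mu>)
    \<and> (\<exists>!\<nu>. gibbs Y (\<lambda>y. ln (gbar (full_shift k) Y \<pi> f 1 y)) \<nu>)
    \<and> (\<forall>\<mu>. gibbs (full_shift k) f \<mu> \<longrightarrow>
          gibbs Y (\<lambda>y. ln (gbar (full_shift k) Y \<pi> f 1 y)) (distr \<mu> (restrict_space borel Y) \<pi>))"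
proof -
  note k = assms(1)
  define X where "X = full_shift k"
  obtain p where p: "\<forall>x\<in>full_shift k. \<forall>i. \<pi> x i = p (x i)"
    using assms(3) unfolding one_block_factor_def by blast
  have Y: "\<pi> ` full_shift k = Y" and cont: "continuous_on (full_shift k) \<pi>"
    and comm: "\<forall>x\<in>full_shift k. \<pi> (sshift x) = sshift (\<pi> x)"
    using assms(3) unfolding one_block_factor_def by auto
  obtain F where Fh: "\<forall>x\<in>full_shift k. f x = F (x 0)" using assms(5) by blast
  define G where "G = Gf k p F"
  define AY where "AY = p ` {1..k}"
  interpret bX: bsys "{1..k}" F using k by unfold_locales auto
  have SX: "bX.S = full_shift k" unfolding bX.S_def full_shift_def by (rule refl)
  have G_pos: "G b > 0" if "b \<in> AY" for b
  proof -
    have "{a\<in>{1..k}. p a = b} \<noteq> {}" using that by (auto simp: AY_def)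
    then show ?thesis unfolding G_def Gf_def by (intro sum_pos) auto
  qed
  interpret bY: bsys AY "\<lambda>b. ln (G b)" using k by unfold_locales (auto simp: AY_def)
  have SY: "bY.S = Y"
  proof
    show "bY.S \<subseteq> Y"
    proof
      fix y assume y: "y \<in> bY.S"
      define x where "x i = (SOME a. a \<in> {1..k} \<and> p a = y i)" for i
      have x: "x i \<in> {1..k} \<and> p (x i) = y i" for i
      proof -
        have "y i \<in> AY" using y unfolding bY.S_def by blast
        then have "\<exists>a. a \<in> {1..k} \<and> p a = y i" unfolding AY_def by force
        then show ?thesis unfolding x_def by (rule someI_ex)
      qed
      then have xX: "x \<in> full_shift k" by (simp add: full_shift_def)
      then have "\<pi> x = y" using p x by auto
      then show "y \<in> Y" using xX Y by blast
    qed
    show "Y \<subseteq> bY.S"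
    proof
      fix y assume "y \<in> Y"
      then obtain x where "x \<in> full_shift k" "y = \<pi> x" using Y by blast
      then have "\<forall>i. y i \<in> AY" using p by (auto simp: AY_def full_shift_def)
      then show "y \<in> bY.S" unfolding bY.S_def by blast
    qed
  qed
  have gb: "gbar X Y \<pi> f n y = (\<Prod>i<n. G (y i))" if "y \<in> Y" for n y
    unfolding X_def G_def by (rule gbar_formula[OF p Fh Y that k])
  have yAY: "y i \<in> AY" if "y \<in> Y" for y i using that SY unfolding bY.S_def by blast
  have psi: "\<forall>y\<in>bY.S. ln (gbar X Y \<pi> f 1 y) = ln (G (y 0))"
    using gb SY by simp
  have shY: "sshift y \<in> Y" if "y \<in> Y" for y using bY.S_shift SY that by blast
  have part1: "\<forall>n\<ge>2. \<forall>y\<in>Y. gbar X Y \<pi> f n y = gbar X Y \<pi> f 1 y * gbar X Y \<pi> f (n - 1) (sshift y)"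
  proof (intro allI impI ballI)
    fix n :: nat and y assume n: "2 \<le> n" and y: "y \<in> Y"
    obtain m where m: "n = Suc m" using n by (cases n) auto
    show "gbar X Y \<pi> f n y = gbar X Y \<pi> f 1 y * gbar X Y \<pi> f (n - 1) (sshift y)"
    proof -
      have e1: "(\<Prod>i<(1::nat). G (y i)) = G (y 0)" by simp
      have e2: "(\<Prod>i<Suc m - 1. G (sshift y i)) = (\<Prod>i<m. G (y (Suc i)))" by (simp add: sshift_def)
      show ?thesis unfolding gb[OF y] gb[OF shY[OF y]] m e1 e2 by (rule prod.lessThan_Suc_shift)
    qed
  qed
  have part2: "(\<lambda>n. (\<integral>y. ln (gbar X Y \<pi> f n y) \<partial>m) / real n) \<longlonglongrightarrow> (\<integral>y. ln (gbar X Y \<pi> f 1 y) \<partial>m)"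
    if inv: "invariant_prob Y m" for m
  proof -
    have inv': "invariant_prob bY.S m" using inv SY by simp
    have sp: "space m = Y" using bY.space_inv[OF inv'] SY by simp
    have sets_m: "sets m = sets (restrict_space borel Y)" and pr: "prob_space m"
      and shm: "sshift \<in> measurable m m"
      and invm: "\<forall>A\<in>sets m. emeasure m (sshift -` A \<inter> space m) = emeasure m A"
      using inv by (auto simp: invariant_prob_def)
    interpret M: prob_space m by (rule pr)
    define h where "h b = ln (G b)" for b
    have meas: "(\<lambda>y. h (y i)) \<in> borel_measurable m" for i
    proof -
      have "(\<lambda>y. h (y i)) \<in> borel_measurable (restrict_space borel Y)"
        by (intro measurable_restrict_space1 fun_meas)
      then show ?thesis by (simp add: measurable_cong_sets[OF sets_m refl])
    qed
    have intg: "integrable m (\<lambda>y. h (y i))" for i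
    proof (rule M.integrable_const_bound[where B="\<Sum>b\<in>AY. \<bar>h b\<bar>"])
      show "AE x in m. norm (h (x i)) \<le> (\<Sum>b\<in>AY. \<bar>h b\<bar>)"
      proof (rule AE_I2)
        fix x assume "x \<in> space m"
        then have "x i \<in> AY" using yAY sp by auto
        then show "norm (h (x i)) \<le> (\<Sum>b\<in>AY. \<bar>h b\<bar>)"
          using member_le_sum[of "x i" AY "\<lambda>b. \<bar>h b\<bar>"] bY.finA by simp
      qed
    qed (rule meas)
    have dm: "distr m m sshift = m"
    proof (rule measure_eqI)
      fix A assume "A \<in> sets (distr m m sshift)"
      then show "emeasure (distr m m sshift) A = emeasure m A"
        using shm invm by (simp add: emeasure_distr)
    qed simp
    have shint: "(\<integral>y. h (y (Suc i)) \<partial>m) = (\<integral>y. h (y i) \<partial>m)" for i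
    proof -
      have "(\<integral>y. h (y i) \<partial>m) = (\<integral>y. h (y i) \<partial>distr m m sshift)" by (simp add: dm)
      also have "\<dots> = (\<integral>y. h (sshift y i) \<partial>m)" by (rule integral_distr[OF shm meas])
      finally show ?thesis by (simp add: sshift_def)
    qed
    have int0: "(\<integral>y. h (y i) \<partial>m) = (\<integral>y. h (y 0) \<partial>m)" for i
      by (induction i) (simp_all add: shint)
    have intn: "(\<integral>y. ln (gbar X Y \<pi> f n y) \<partial>m) = real n * (\<integral>y. h (y 0) \<partial>m)" for n
    proof -
      have "(\<integral>y. ln (gbar X Y \<pi> f n y) \<partial>m) = (\<integral>y. (\<Sum>i<n. h (y i)) \<partial>m)"
      proof (rule Bochner_Integration.integral_cong[OF refl])
        fix y assume "y \<in> space m"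
        then have y: "y \<in> Y" using sp by simp
        show "ln (gbar X Y \<pi> f n y) = (\<Sum>i<n. h (y i))"
        proof -
          have gp: "G (y i) \<noteq> 0" for i using G_pos[OF yAY[OF y, of i]] by simp
          show ?thesis unfolding gb[OF y] h_def by (subst ln_prod) (simp_all add: gp)
        qed
      qed
      also have "\<dots> = (\<Sum>i<n. (\<integral>y. h (y i) \<partial>m))"
        by (rule Bochner_Integration.integral_sum) (rule intg)
      also have "\<dots> = (\<Sum>i<n. (\<integral>y. h (y 0) \<partial>m))" by (intro sum.cong refl) (rule int0)
      also have "\<dots> = real n * (\<integral>y. h (y 0) \<partial>m)" by simp
      finally show ?thesis .
    qed
    show ?thesis
    proof (rule tendsto_eventually)
      show "\<forall>\<^sub>F n in sequentially. (\<integral>y. ln (gbar X Y \<pi> f n y) \<partial>m) / real n = (\<integral>y. ln (gbar X Y \<pi> f 1 y) \<partial>m)"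
        unfolding eventually_sequentially intn by (intro exI[of _ 1]) auto
    qed
  qed
  have FhX: "\<forall>x\<in>bX.S. f x = F (x 0)" using Fh SX by simp
  have part3: "\<exists>!\<mu>. gibbs X f \<mu>" using bX.ex1_gibbs[OF FhX] SX X_def by simp
  have part4: "\<exists>!\<nu>. gibbs Y (\<lambda>y. ln (gbar X Y \<pi> f 1 y)) \<nu>" using bY.ex1_gibbs[OF psi] SY by simp
  have part5: "gibbs Y (\<lambda>y. ln (gbar X Y \<pi> f 1 y)) (distr \<mu> (restrict_space borel Y) \<pi>)"
    if g: "gibbs X f \<mu>" for \<mu>
  proof -
    have mu: "\<mu> = bX.\<beta>" using bX.gibbs_unique[OF FhX] g SX X_def by simp
    define \<nu> where "\<nu> = distr bX.\<beta> (restrict_space borel Y) \<pi>"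
    have sbX: "sets bX.\<beta> = sets (restrict_space borel X)" using bX.sets_beta SX X_def by simp
    have spX: "space bX.\<beta> = X" using bX.space_beta SX X_def by simp
    have pim: "\<pi> \<in> measurable bX.\<beta> (restrict_space borel Y)"
    proof -
      have "\<pi> \<in> borel_measurable (restrict_space borel X)"
        using borel_measurable_continuous_on_restrict[OF cont] X_def by simp
      then have "\<pi> \<in> measurable (restrict_space borel X) (restrict_space borel Y)"
        using Y X_def by (intro measurable_restrict_space2) (auto simp: space_restrict_space)
      then show ?thesis unfolding measurable_cong_sets[OF sbX refl] .
    qed
    have sets_nu: "sets \<nu> = sets (restrict_space borel Y)" by (simp add: \<nu>_def)
    have sp_nu: "space \<nu> = Y" by (simp add: \<nu>_def space_restrict_space)
    have shnu: "sshift \<in> measurable \<nu> \<nu>"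
    proof -
      have "sshift \<in> measurable (restrict_space borel Y) (restrict_space borel Y)"
        using shY by (intro measurable_restrict_space3[OF sshift_meas]) auto
      then show ?thesis by (simp add: measurable_cong_sets[OF sets_nu sets_nu])
    qed
    have invX: "\<forall>A\<in>sets bX.\<beta>. emeasure bX.\<beta> (sshift -` A \<inter> space bX.\<beta>) = emeasure bX.\<beta> A"
      using bX.inv_beta by (simp add: invariant_prob_def)
    have inv_nu: "invariant_prob Y \<nu>"
      unfolding invariant_prob_def
    proof (intro conjI ballI sets_nu shnu)
      show "prob_space \<nu>" unfolding \<nu>_def by (rule prob_space.prob_space_distr[OF bX.prob_beta pim])
      fix B assume B: "B \<in> sets \<nu>"
      have B': "B \<in> sets (restrict_space borel Y)" using B sets_nu by simp
      have sB: "sshift -` B \<inter> Y \<in> sets (restrict_space borel Y)"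
        using measurable_sets[OF shnu B] sp_nu sets_nu by simp
      have pB: "\<pi> -` B \<inter> X \<in> sets bX.\<beta>" using measurable_sets[OF pim B'] spX by simp
      have seteq: "\<pi> -` (sshift -` B \<inter> Y) \<inter> X = sshift -` (\<pi> -` B \<inter> X) \<inter> X"
      proof -
        have "\<pi> x \<in> Y" "sshift x \<in> X" "\<pi> (sshift x) = sshift (\<pi> x)" if "x \<in> X" for x
          using that Y comm bX.S_shift SX X_def by auto
        then show ?thesis by auto
      qed
      have "emeasure \<nu> (sshift -` B \<inter> space \<nu>) = emeasure bX.\<beta> (\<pi> -` (sshift -` B \<inter> Y) \<inter> X)"
        unfolding \<nu>_def using sB pim spX by (simp add: emeasure_distr space_restrict_space)
      also have "\<dots> = emeasure bX.\<beta> (\<pi> -` B \<inter> X)"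
        unfolding seteq using invX[rule_format, OF pB] unfolding spX .
      also have "\<dots> = emeasure \<nu> B"
        unfolding \<nu>_def using B' pim spX by (simp add: emeasure_distr)
      finally show "emeasure \<nu> (sshift -` B \<inter> space \<nu>) = emeasure \<nu> B" .
    qed
    have ZsEq: "bY.Zs = bX.Zs"
    proof -
      have "bY.Zs = (\<Sum>b\<in>AY. G b)" unfolding bY.Zs_def using G_pos by (intro sum.cong) auto
      also have "\<dots> = (\<Sum>a\<in>{1..k}. exp (F a))"
        unfolding AY_def G_def Gf_def by (rule sum.image_gen[symmetric]) simp
      finally show ?thesis unfolding bX.Zs_def .
    qed
    have qsum: "measure bX.Pm {a. p a = b} = G b / bX.Zs" for b
    proof -
      have "measure bX.Pm {a. p a = b} = (\<Sum>a\<in>{a. p a = b} \<inter> {1..k}. bX.q a)" by (rule bX.meas_Pm)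
      also have "\<dots> = (\<Sum>a\<in>{a\<in>{1..k}. p a = b}. exp (F a) / bX.Zs)"
        unfolding bX.q_def by (intro sum.cong) auto
      also have "\<dots> = G b / bX.Zs" by (simp add: G_def Gf_def sum_divide_distrib)
      finally show ?thesis .
    qed
    have cv: "measure \<nu> (cyl bY.S n z) = bY.b n z" if z: "z \<in> bY.S" and n: "n \<ge> 1" for z n
    proof -
      have zY: "z \<in> Y" using z SY by simp
      have cs: "cyl Y n z \<in> sets (restrict_space borel Y)" using bY.cyl_sets SY by simp
      have pre: "\<pi> -` cyl Y n z \<inter> X = bX.S \<inter> {x. \<forall>j\<in>{..<n}. x j \<in> {a. p a = z j}}"
        using p Y SX X_def by (auto simp: cyl_def)
      have "measure \<nu> (cyl Y n z) = measure bX.\<beta> (\<pi> -` cyl Y n z \<inter> X)"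
        unfolding \<nu>_def using measure_distr[OF pim cs] spX by simp
      also have "\<dots> = (\<Prod>j<n. measure bX.Pm {a. p a = z j})"
        unfolding pre by (rule bX.measure_rect_S) simp
      also have "\<dots> = (\<Prod>j<n. G (z j) / bX.Zs)" unfolding qsum by (rule refl)
      also have "\<dots> = bY.b n z"
        unfolding bY.b_def bY.q_def using yAY[OF zY] G_pos ZsEq by (intro prod.cong refl) auto
      finally show ?thesis using SY by simp
    qed
    have "gibbs bY.S (\<lambda>y. ln (gbar X Y \<pi> f 1 y)) \<nu>"
      by (rule bY.gibbsI[OF psi]) (use inv_nu SY cv in auto)
    then show ?thesis using SY mu \<nu>_def by simp
  qed
  show ?thesis using part1 part2 part3 part4 part5 unfolding X_def by blast
qed


end
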